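(* Let $z_0\in\mathbb{B}^2$, $t>0$ and $r=e^t$. Then the Hilbert circle $\partial B_h(z_0,t)=\{z\in\mathbb{B}^2: h_{\mathbb{B}^2}(z_0,z)=t\}$ is exactly the set of $z\in\mathbb{C}$ satisfying $$\overline{z_0}^2rz^2-\big((r^2+1)|z_0|^2-(r+1)^2\big)z\overline{z}+z_0^2r\overline{z}^2-4\overline{z_0}rz-4z_0r\overline{z}+(r+1)^2|z_0|^2-(r-1)^2=0,$$ and this set is a Euclidean ellipse contained in $\mathbb{B}^2$.
   Context: $\mathbb{B}^2$ is the open unit disk in $\mathbb{C}$. For distinct $x,y\in\mathbb{B}^2$ the Hilbert metric is $h_{\mathbb{B}^2}(x,y)=\log\frac{|u-y||x-v|}{|u-x||y-v|}$, where $u,v$ are the intersection points of the line through $x,y$ with the unit circle, labelled so that $|u-x|<|u-y|$; also $h_{\mathbb{B}^2}(x,x)=0$. $B_h(z_0,t)=\{z\in\mathbb{B}^2:h_{\mathbb{B}^2}(z_0,z)<t\}$. *)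

theory Defs
  imports "HOL-Analysis.Analysis"
begin

definition hilbert_endpoints :: "complex \<Rightarrow> complex \<Rightarrow> complex \<times> complex" where
  "hilbert_endpoints x y = (SOME (u, v).
      cmod u = 1 \<and> cmod v = 1 \<and> u \<noteq> v \<and>
      (\<exists>s::real. u = x + of_real s * (y - x)) \<and>
      (\<exists>s::real. v = x + of_real s * (y - x)) \<and>
      cmod (u - x) < cmod (u - y))"

definition hilbert_disk :: "complex \<Rightarrow> complex \<Rightarrow> real" where
  "hilbert_disk x y = (if x = y then 0 else
     (let (u, v) = hilbert_endpoints x y in
        ln ((cmod (u - y) * cmod (x - v)) / (cmod (u - x) * cmod (y - v)))))"

text \<open>Euclidean ellipse in the plane (circles allowed, as the case of coinciding foci).\<close>
definition is_ellipse :: "complex set \<Rightarrow> bool" where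
  "is_ellipse E \<longleftrightarrow> (\<exists>f1 f2 (a::real). dist f1 f2 < 2 * a \<and>
      E = {z. dist z f1 + dist z f2 = 2 * a})"

end

theory Submission
  imports Defs
begin


definition G4 :: "complex \<Rightarrow> real \<Rightarrow> complex \<Rightarrow> real" where
 "G4 z0 r z = 4*r*(Re z0 * Re z + Im z0 * Im z - 1)\<^sup>2 - (1+r)\<^sup>2*(1 - ((Re z0)\<^sup>2 + (Im z0)\<^sup>2))*(1 - ((Re z)\<^sup>2 + (Im z)\<^sup>2))"

lemma F_eq: "(cnj z0)\<^sup>2 * of_real r * z\<^sup>2
               - of_real ((r\<^sup>2 + 1) * (cmod z0)\<^sup>2 - (r + 1)\<^sup>2) * z * cnj z
               + z0\<^sup>2 * of_real r * (cnj z)\<^sup>2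
               - 4 * cnj z0 * of_real r * z - 4 * z0 * of_real r * cnj z
               + of_real ((r + 1)\<^sup>2 * (cmod z0)\<^sup>2 - (r - 1)\<^sup>2) = of_real (G4 z0 r z)"
  unfolding cmod_power2 by (simp add: complex_eq_iff G4_def power2_eq_square algebra_simps)

lemma G_eq: "(1+r)\<^sup>2 * ((Re (cnj z0 * (z - z0)))\<^sup>2 - (cmod (z - z0))\<^sup>2 * ((cmod z0)\<^sup>2 - 1))
   - (r-1)\<^sup>2 * (Re (cnj z0 * (z - z0)) + ((cmod z0)\<^sup>2 - 1))\<^sup>2 = G4 z0 r z"
  unfolding cmod_power2 by (simp add: G4_def power2_eq_square algebra_simps)

lemma quad: "(cmod (x + of_real s * d))\<^sup>2 = (cmod d)\<^sup>2 * s\<^sup>2 + 2 * Re (cnj x * d) * s + (cmod x)\<^sup>2"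
  unfolding cmod_power2 by (simp add: power2_eq_square algebra_simps)



lemma alg:
  fixes a b c su sv r :: real
  assumes a: "a > 0" and e1: "a * su\<^sup>2 + 2 * b * su + c = 0" and e2: "a * sv\<^sup>2 + 2 * b * sv + c = 0"
    and su: "su < 0" and sv: "sv > 1" and r: "r > 1"
  shows "(1 - su) * sv / ((- su) * (sv - 1)) = r \<longleftrightarrow> (1 + r)\<^sup>2 * (b\<^sup>2 - a * c) = (r - 1)\<^sup>2 * (b + c)\<^sup>2"
proof -
  have ne: "su \<noteq> sv" using su sv by simp
  have "(su - sv) * (a * (su + sv) + 2 * b) = (a * su\<^sup>2 + 2 * b * su + c) - (a * sv\<^sup>2 + 2 * b * sv + c)"
    by (simp add: power2_eq_square algebra_simps)
  hence "(su - sv) * (a * (su + sv) + 2 * b) = 0" using e1 e2 by simp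
  hence v1: "a * (su + sv) = -2 * b" using ne by simp
  have v2: "a * su * sv = c"
  proof -
    have "a * su * sv - c = su * (a * (su + sv) + 2 * b) - (a * su\<^sup>2 + 2 * b * su + c)"
      by (simp add: power2_eq_square algebra_simps)
    thus ?thesis using e1 v1 by simp
  qed
  define X where "X = (1 + r) * (sv - su)"
  define Y where "Y = (r - 1) * (su * (1 - sv) + sv * (1 - su))"
  have den: "(- su) * (sv - 1) > 0" using su sv by (intro mult_pos_pos) auto
  have "(1 - su) * sv / ((- su) * (sv - 1)) = r \<longleftrightarrow> (1 - su) * sv = r * ((- su) * (sv - 1))"
    using nonzero_divide_eq_eq[of "(- su) * (sv - 1)" "(1 - su) * sv" r] den su sv by (simp add: mult.commute)
  also have "\<dots> \<longleftrightarrow> X = Y"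
  proof -
    have "X - Y = 2 * ((1 - su) * sv - r * ((- su) * (sv - 1)))" unfolding X_def Y_def
      by (simp add: algebra_simps)
    thus ?thesis by (metis eq_iff_diff_eq_0 mult_eq_0_iff zero_neq_numeral)
  qed
  also have "\<dots> \<longleftrightarrow> X\<^sup>2 = Y\<^sup>2"
  proof -
    have "X > 0" unfolding X_def using su sv r by simp
    moreover have "su * (1 - sv) > 0" using su sv by (simp add: mult_neg_neg)
    moreover have "sv * (1 - su) > 0" using su sv by simp
    ultimately have "Y > 0" "X > 0" unfolding Y_def using r by simp_all
    thus ?thesis by (simp add: power2_eq_iff_nonneg)
  qed
  also have "\<dots> \<longleftrightarrow> a\<^sup>2 * X\<^sup>2 = a\<^sup>2 * Y\<^sup>2" using a by simp
  also have "a\<^sup>2 * X\<^sup>2 = 4 * ((1 + r)\<^sup>2 * (b\<^sup>2 - a * c))"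
  proof -
    have "a\<^sup>2 * X\<^sup>2 = (1 + r)\<^sup>2 * ((a * (su + sv))\<^sup>2 - 4 * a * (a * su * sv))" unfolding X_def
      by (simp add: power2_eq_square algebra_simps)
    also have "\<dots> = (1 + r)\<^sup>2 * ((-2 * b)\<^sup>2 - 4 * a * c)" using v1 v2 by simp
    finally show ?thesis by (simp add: power2_eq_square algebra_simps)
  qed
  also have "a\<^sup>2 * Y\<^sup>2 = 4 * ((r - 1)\<^sup>2 * (b + c)\<^sup>2)"
  proof -
    have "a\<^sup>2 * Y\<^sup>2 = (r - 1)\<^sup>2 * (a * (su + sv) - 2 * (a * su * sv))\<^sup>2" unfolding Y_def
      by (simp add: power2_eq_square algebra_simps)
    also have "\<dots> = (r - 1)\<^sup>2 * (-2 * b - 2 * c)\<^sup>2" using v1 v2 by simp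
    finally show ?thesis by (simp add: power2_eq_square algebra_simps)
  qed
  finally show ?thesis by simp
qed



lemma inside_seg:
  assumes "cmod x < 1" "cmod y < 1" "0 \<le> s" "s \<le> 1"
  shows "cmod (x + of_real s * (y - x)) < 1"
proof -
  have "x + of_real s * (y - x) = of_real (1 - s) * x + of_real s * y" by (simp add: algebra_simps)
  hence "cmod (x + of_real s * (y - x)) \<le> (1 - s) * cmod x + s * cmod y"
    using assms by (metis norm_triangle_ineq norm_mult norm_of_real abs_of_nonneg diff_ge_0_iff_ge)
  also have "\<dots> < 1"
  proof (cases "s = 0")
    case True thus ?thesis using assms by simp
  next
    case False
    hence "s * cmod y < s" using assms by simp
    moreover have "(1 - s) * cmod x \<le> 1 - s" using assms by (simp add: mult_left_le)
    ultimately show ?thesis by linarith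
  qed
  finally show ?thesis .
qed

lemma hd_formula:
  assumes x: "cmod x < 1" and y: "cmod y < 1" and xy: "x \<noteq> y"
  obtains su sv where "su < 0" "sv > 1"
    "(cmod (y - x))\<^sup>2 * su\<^sup>2 + 2 * Re (cnj x * (y - x)) * su + ((cmod x)\<^sup>2 - 1) = 0"
    "(cmod (y - x))\<^sup>2 * sv\<^sup>2 + 2 * Re (cnj x * (y - x)) * sv + ((cmod x)\<^sup>2 - 1) = 0"
    "hilbert_disk x y = ln ((1 - su) * sv / ((- su) * (sv - 1)))"
proof -
  define d where "d = y - x"
  define a where "a = (cmod d)\<^sup>2"
  define b where "b = Re (cnj x * d)"
  define c where "c = (cmod x)\<^sup>2 - 1"
  have dnz: "d \<noteq> 0" using xy d_def by simp
  have a: "a > 0" using dnz a_def by simp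
  have c: "c < 0" using x c_def by (simp add: power_less_one_iff abs_less_iff)
  have qs: "(cmod (x + of_real s * d))\<^sup>2 = a * s\<^sup>2 + 2 * b * s + c + 1" for s
    using quad[of x s d] a_def b_def c_def by simp
  have yd: "y = x + d" using d_def by simp
  define \<Delta> where "\<Delta> = b\<^sup>2 - a * c"
  have \<Delta>: "\<Delta> > b\<^sup>2" using a c \<Delta>_def by (simp add: mult_pos_neg)
  hence sq: "sqrt \<Delta> > \<bar>b\<bar>" by (metis real_sqrt_abs real_sqrt_less_mono)
  have sq2: "(sqrt \<Delta>)\<^sup>2 = \<Delta>" using \<Delta> by (simp add: order_trans[OF zero_le_power2 less_imp_le])
  define s1 where "s1 = (- b - sqrt \<Delta>) / a"
  define s2 where "s2 = (- b + sqrt \<Delta>) / a"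
  have root: "a * s\<^sup>2 + 2 * b * s + c = 0" if "s = (- b + e * sqrt \<Delta>) / a" "e\<^sup>2 = 1" for s e
  proof -
    have "a * s = - b + e * sqrt \<Delta>" using that a by simp
    have "a * (a * s\<^sup>2 + 2 * b * s + c) = (a * s)\<^sup>2 + 2 * b * (a * s) + a * c"
      by (simp add: power2_eq_square algebra_simps)
    also have "\<dots> = (- b + e * sqrt \<Delta>)\<^sup>2 + 2 * b * (- b + e * sqrt \<Delta>) + a * c"
      using \<open>a * s = - b + e * sqrt \<Delta>\<close> by simp
    also have "\<dots> = e\<^sup>2 * (sqrt \<Delta>)\<^sup>2 - b\<^sup>2 + a * c" by (simp add: power2_eq_square algebra_simps)
    also have "\<dots> = 0" using that sq2 \<Delta>_def by simp
    finally show ?thesis using a by simp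
  qed
  have r1: "a * s1\<^sup>2 + 2 * b * s1 + c = 0" by (rule root[of s1 "-1"]) (simp_all add: s1_def)
  have r2: "a * s2\<^sup>2 + 2 * b * s2 + c = 0" by (rule root[of s2 1]) (simp_all add: s2_def)
  have s1neg: "s1 < 0" using sq a unfolding s1_def by (simp add: divide_neg_pos abs_less_iff)
  have s12: "s1 \<noteq> s2" using sq a unfolding s1_def s2_def by (auto simp: divide_cancel_right)
  define P where "P = (\<lambda>(u::complex, v::complex). cmod u = 1 \<and> cmod v = 1 \<and> u \<noteq> v \<and>
      (\<exists>s::real. u = x + of_real s * (y - x)) \<and>
      (\<exists>s::real. v = x + of_real s * (y - x)) \<and>
      cmod (u - x) < cmod (u - y))"
  have on: "cmod (x + of_real s * d) = 1" if "a * s\<^sup>2 + 2 * b * s + c = 0" for s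
    using qs[of s] that norm_ge_zero[of "x + of_real s * d"] by (auto simp: power2_eq_1_iff)
  have "P (x + of_real s1 * d, x + of_real s2 * d)"
    unfolding P_def
  proof (simp only: prod.case, intro conjI)
    show "cmod (x + of_real s1 * d) = 1" by (rule on[OF r1])
    show "cmod (x + of_real s2 * d) = 1" by (rule on[OF r2])
    show "x + of_real s1 * d \<noteq> x + of_real s2 * d" using s12 dnz by simp
    show "\<exists>s::real. x + of_real s1 * d = x + of_real s * (y - x)" using d_def by blast
    show "\<exists>s::real. x + of_real s2 * d = x + of_real s * (y - x)" using d_def by blast
    have "x + of_real s1 * d - y = of_real (s1 - 1) * d" using yd by (simp add: algebra_simps)
    hence A: "cmod (x + of_real s1 * d - y) = \<bar>s1 - 1\<bar> * cmod d" by (simp only: norm_mult norm_of_real)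
    have B: "cmod (x + of_real s1 * d - x) = \<bar>s1\<bar> * cmod d" by (simp add: norm_mult)
    have "\<bar>s1\<bar> < \<bar>s1 - 1\<bar>" using s1neg by simp
    moreover have "cmod d > 0" using dnz by simp
    ultimately have "\<bar>s1\<bar> * cmod d < \<bar>s1 - 1\<bar> * cmod d" by (rule mult_strict_right_mono)
    thus "cmod (x + of_real s1 * d - x) < cmod (x + of_real s1 * d - y)" by (simp only: A B)
  qed
  hence "\<exists>p. P p" by blast
  hence Pe: "P (hilbert_endpoints x y)" unfolding hilbert_endpoints_def P_def by (rule someI_ex)
  obtain u v where uv: "hilbert_endpoints x y = (u, v)" by (cases "hilbert_endpoints x y")
  from Pe uv obtain su sv where
    u1: "cmod u = 1" and v1: "cmod v = 1" and une: "u \<noteq> v" and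
    us: "u = x + of_real su * d" and vs: "v = x + of_real sv * d" and
    ux: "cmod (u - x) < cmod (u - y)"
    unfolding P_def d_def by auto
  have eu: "a * su\<^sup>2 + 2 * b * su + c = 0" using qs[of su] u1 us by simp
  have ev: "a * sv\<^sup>2 + 2 * b * sv + c = 0" using qs[of sv] v1 vs by simp
  have ne: "su \<noteq> sv" using une us vs by auto
  have "(su - sv) * (a * (su + sv) + 2 * b) = (a * su\<^sup>2 + 2 * b * su + c) - (a * sv\<^sup>2 + 2 * b * sv + c)"
    by (simp add: power2_eq_square algebra_simps)
  hence "(su - sv) * (a * (su + sv) + 2 * b) = 0" using eu ev by simp
  hence vt1: "a * (su + sv) = -2 * b" using ne by simp
  have vt2: "a * su * sv = c"
  proof -
    have "a * su * sv - c = su * (a * (su + sv) + 2 * b) - (a * su\<^sup>2 + 2 * b * su + c)"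
      by (simp add: power2_eq_square algebra_simps)
    thus ?thesis using eu vt1 by simp
  qed
  have prod: "su * sv < 0" using vt2 a c
    by (metis mult.assoc mult_less_cancel_left_pos mult_zero_right)
  have notin: "\<not> (0 \<le> s \<and> s \<le> 1)" if "a * s\<^sup>2 + 2 * b * s + c = 0" for s
  proof
    assume "0 \<le> s \<and> s \<le> 1"
    hence "cmod (x + of_real s * d) < 1" using inside_seg[OF x y] d_def by auto
    thus False using on[OF that] by simp
  qed
  have "cmod (u - x) = \<bar>su\<bar> * cmod d" using us by (simp add: norm_mult)
  moreover have "u - y = of_real (su - 1) * d" using us yd by (simp add: algebra_simps)
  hence "cmod (u - y) = \<bar>su - 1\<bar> * cmod d" by (simp only: norm_mult norm_of_real)
  ultimately have "\<bar>su\<bar> < \<bar>su - 1\<bar>" using ux dnz by simp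
  hence "su < 1/2" by linarith
  hence sun: "su < 0" using notin[OF eu] by linarith
  hence "sv > 0" using prod by (simp add: mult_less_0_iff)
  hence svp: "sv > 1" using notin[OF ev] by linarith
  have n1: "cmod (u - y) = (1 - su) * cmod d" using \<open>cmod (u - y) = \<bar>su - 1\<bar> * cmod d\<close> sun by simp
  have n2: "cmod (u - x) = (- su) * cmod d" using \<open>cmod (u - x) = \<bar>su\<bar> * cmod d\<close> sun by simp
  have "x - v = of_real (- sv) * d" using vs by simp
  hence n3: "cmod (x - v) = sv * cmod d" by (simp only: norm_mult norm_of_real) (use svp in simp)
  have "y - v = of_real (1 - sv) * d" using vs yd by (simp add: algebra_simps)
  hence n4: "cmod (y - v) = (sv - 1) * cmod d" by (simp only: norm_mult norm_of_real) (use svp in simp)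
  have "hilbert_disk x y = ln ((cmod (u - y) * cmod (x - v)) / (cmod (u - x) * cmod (y - v)))"
    unfolding hilbert_disk_def using xy uv by simp
  also have "(cmod (u - y) * cmod (x - v)) / (cmod (u - x) * cmod (y - v))
      = (1 - su) * sv / ((- su) * (sv - 1))"
  proof -
    have "(cmod (u - y) * cmod (x - v)) / (cmod (u - x) * cmod (y - v))
      = ((1 - su) * sv * (cmod d * cmod d)) / ((- su) * (sv - 1) * (cmod d * cmod d))"
      unfolding n1 n2 n3 n4 by (simp only: ac_simps)
    also have "\<dots> = (1 - su) * sv / ((- su) * (sv - 1))"
      by (rule mult_divide_mult_cancel_right) (use dnz in simp)
    finally show ?thesis .
  qed
  finally have "hilbert_disk x y = ln ((1 - su) * sv / ((- su) * (sv - 1)))" .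
  thus ?thesis using that sun svp eu ev unfolding a_def b_def c_def d_def by blast
qed

lemma poly_id:
  fixes p q x y r A B g al :: real
  assumes HA: "A = (1+r)\<^sup>2*(1-(p\<^sup>2+q\<^sup>2)) + 4*r*(p\<^sup>2+q\<^sup>2)" and AB: "A * B = 1"
    and hg: "g\<^sup>2 = 4*(r-1)\<^sup>2*r*(1-(p\<^sup>2+q\<^sup>2))*B\<^sup>2" and hal: "al\<^sup>2 = (r-1)\<^sup>2*(1-(p\<^sup>2+q\<^sup>2))*B"
  shows "(((x - (4*r*B*p - g*q))\<^sup>2 + (y - (4*r*B*q + g*p))\<^sup>2) - ((x - (4*r*B*p + g*q))\<^sup>2 + (y - (4*r*B*q - g*p))\<^sup>2))\<^sup>2
      - 8*al\<^sup>2*(((x - (4*r*B*p - g*q))\<^sup>2 + (y - (4*r*B*q + g*p))\<^sup>2) + ((x - (4*r*B*p + g*q))\<^sup>2 + (y - (4*r*B*q - g*p))\<^sup>2))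
      + 16*(al\<^sup>2)\<^sup>2
     = - 16 * al\<^sup>2 * B * (4*r*(p * x + q * y - 1)\<^sup>2 - (1+r)\<^sup>2*(1 - (p\<^sup>2 + q\<^sup>2))*(1 - (x\<^sup>2 + y\<^sup>2)))"
  using HA AB hg hal by algebra

lemma ellipse_part:
  assumes z0: "cmod z0 < 1" and r: "r > 1"
  shows "\<exists>f1 f2 (al::real). dist f1 f2 < 2 * al \<and> (\<forall>z. dist z f1 + dist z f2 = 2 * al \<longleftrightarrow> G4 z0 r z = 0)"
proof -
  define p where "p = Re z0"
  define q where "q = Im z0"
  define m where "m = p\<^sup>2 + q\<^sup>2"
  have mc: "m = (cmod z0)\<^sup>2" unfolding m_def p_def q_def by (simp add: cmod_power2)
  have m0: "0 \<le> m" using mc by simp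
  have m1: "m < 1" using mc z0 by (simp add: power_less_one_iff abs_less_iff)
  define A where "A = (1+r)\<^sup>2*(1-m) + 4*r*m"
  have K: "(1+r)\<^sup>2*(1-m) > 0" using m1 r by simp
  have A0: "A > 0" unfolding A_def using K m0 r by (simp add: add_pos_nonneg)
  define B where "B = 1 / A"
  have AB: "A * B = 1" using A0 B_def by simp
  have B0: "B > 0" using A0 B_def by simp
  define g where "g = 2*(r-1)* sqrt(r*(1-m))*B"
  define al where "al = (r-1)* sqrt(1-m)* sqrt B"
  have g0: "g \<ge> 0" unfolding g_def using r m1 B0 by simp
  have al0: "al > 0" unfolding al_def using r m1 B0 by simp
  have hg: "g\<^sup>2 = 4*(r-1)\<^sup>2*r*(1-m)*B\<^sup>2"
    unfolding g_def using r m1 by (simp add: power_mult_distrib power2_eq_square algebra_simps)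
  have hal: "al\<^sup>2 = (r-1)\<^sup>2*(1-m)*B"
    unfolding al_def using r m1 B0 by (simp add: power_mult_distrib)
  define f1 where "f1 = Complex (4*r*B*p - g*q) (4*r*B*q + g*p)"
  define f2 where "f2 = Complex (4*r*B*p + g*q) (4*r*B*q - g*p)"
  have df12: "dist f1 f2 = 2 * g * cmod z0"
  proof -
    have "(dist f1 f2)\<^sup>2 = (2*g)\<^sup>2 * m" unfolding f1_def f2_def m_def dist_norm cmod_power2
      by (simp add: power2_eq_square algebra_simps)
    also have "\<dots> = (2 * g * cmod z0)\<^sup>2" using mc by (simp add: power_mult_distrib)
    finally show ?thesis using g0 by (simp add: power2_eq_iff_nonneg)
  qed
  have lt: "dist f1 f2 < 2 * al"
  proof -
    have "(g * cmod z0)\<^sup>2 = 4*(r-1)\<^sup>2*r*(1-m)*m*B\<^sup>2" using hg mc by (simp add: power_mult_distrib)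
    also have "\<dots> < (r-1)\<^sup>2*(1-m)*B\<^sup>2*((1+r)\<^sup>2*(1-m) + 4*r*m)"
    proof -
      have "0 < (r-1)\<^sup>2*(1-m)*B\<^sup>2*((1+r)\<^sup>2*(1-m))" using K r m1 B0 by simp
      thus ?thesis by (simp add: algebra_simps)
    qed
    also have "\<dots> = al\<^sup>2" using hal AB unfolding A_def[symmetric] by algebra
    finally have "g * cmod z0 < al" by (rule power2_less_imp_less) (use al0 in simp)
    thus ?thesis using df12 by simp
  qed
  have main: "dist z f1 + dist z f2 = 2 * al \<longleftrightarrow> G4 z0 r z = 0" for z
  proof -
    define x where "x = Re z"
    define y where "y = Im z"
    define d1 where "d1 = dist z f1"
    define d2 where "d2 = dist z f2"
    have D1: "d1\<^sup>2 = (x - (4*r*B*p - g*q))\<^sup>2 + (y - (4*r*B*q + g*p))\<^sup>2"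
      unfolding d1_def f1_def x_def y_def by (simp add: dist_norm cmod_power2)
    have D2: "d2\<^sup>2 = (x - (4*r*B*p + g*q))\<^sup>2 + (y - (4*r*B*q - g*p))\<^sup>2"
      unfolding d2_def f2_def x_def y_def by (simp add: dist_norm cmod_power2)
    have Q: "(d1\<^sup>2 - d2\<^sup>2)\<^sup>2 - 8*al\<^sup>2*(d1\<^sup>2 + d2\<^sup>2) + 16*(al\<^sup>2)\<^sup>2 = - 16 * al\<^sup>2 * B * G4 z0 r z"
      unfolding D1 D2 G4_def x_def[symmetric] y_def[symmetric] p_def[symmetric] q_def[symmetric]
      by (rule poly_id) (use AB hg hal in \<open>simp_all add: A_def m_def\<close>)
    have fac: "(d1\<^sup>2 - d2\<^sup>2)\<^sup>2 - 8*al\<^sup>2*(d1\<^sup>2 + d2\<^sup>2) + 16*(al\<^sup>2)\<^sup>2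
        = (d1 + d2 - 2*al) * ((d1 + d2 + 2*al) * ((d1 - d2 - 2*al) * (d1 - d2 + 2*al)))"
      by (simp add: power2_eq_square algebra_simps)
    have t1: "d1 \<le> d2 + dist f1 f2" unfolding d1_def d2_def by (metis dist_commute dist_triangle)
    have t2: "d2 \<le> d1 + dist f1 f2" unfolding d1_def d2_def by (metis dist_commute dist_triangle)
    have nz: "(d1 + d2 + 2*al) * ((d1 - d2 - 2*al) * (d1 - d2 + 2*al)) \<noteq> 0"
    proof -
      have "d1 \<ge> 0" "d2 \<ge> 0" unfolding d1_def d2_def by simp_all
      hence n1: "d1 + d2 + 2*al > 0" using al0 by linarith
      have n2: "d1 - d2 - 2*al < 0" using t1 lt by linarith
      have n3: "d1 - d2 + 2*al > 0" using t2 lt by linarith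
      show ?thesis using n1 n2 n3 by simp
    qed
    have "dist z f1 + dist z f2 = 2 * al \<longleftrightarrow> d1 + d2 - 2*al = 0" using d1_def d2_def by auto
    also have "\<dots> \<longleftrightarrow> - 16 * al\<^sup>2 * B * G4 z0 r z = 0" unfolding Q[symmetric] fac using nz by simp
    also have "\<dots> \<longleftrightarrow> G4 z0 r z = 0" using al0 B0 by simp
    finally show ?thesis .
  qed
  show ?thesis using lt main by blast
qed


lemma ball_incl:
  assumes z0: "cmod z0 < 1" and r: "r > 0" and G: "G4 z0 r z = 0"
  shows "cmod z < 1"
proof (rule ccontr)
  assume "\<not> cmod z < 1"
  hence z1: "cmod z \<ge> 1" by simp
  define n where "n = (Re z)\<^sup>2 + (Im z)\<^sup>2"
  define m where "m = (Re z0)\<^sup>2 + (Im z0)\<^sup>2"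
  define w where "w = Re z0 * Re z + Im z0 * Im z"
  have nc: "n = (cmod z)\<^sup>2" unfolding n_def by (simp add: cmod_power2)
  have mc: "m = (cmod z0)\<^sup>2" unfolding m_def by (simp add: cmod_power2)
  have n1: "n \<ge> 1" using z1 nc by (simp add: one_le_power)
  have m1: "m < 1" using mc z0 by (simp add: power_less_one_iff abs_less_iff)
  have K: "(1+r)\<^sup>2*(1-m) > 0" using m1 r by (simp add: add_pos_pos)
  have eq: "4*r*(w-1)\<^sup>2 = (1+r)\<^sup>2*(1-m)*(1-n)" using G unfolding G4_def w_def m_def n_def by simp
  have "(1+r)\<^sup>2*(1-m)*(1-n) \<le> 0" using K n1 by (simp add: mult_nonneg_nonpos)
  hence "4*r*(w-1)\<^sup>2 \<le> 0" using eq by simp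
  hence "(w-1)\<^sup>2 \<le> 0" using r by (simp add: mult_le_0_iff)
  hence w1: "w = 1" by simp
  hence "(1+r)\<^sup>2*(1-m)*(1-n) = 0" using eq by simp
  hence "n = 1" using m1 r by auto
  hence cz: "cmod z = 1" using nc norm_ge_zero[of z] by (auto simp: power2_eq_1_iff)
  have "w = Re (cnj z0 * z)" unfolding w_def by simp
  also have "\<dots> \<le> cmod (cnj z0 * z)" by (rule complex_Re_le_cmod)
  also have "\<dots> = cmod z0" using cz by (simp add: norm_mult)
  finally show False using w1 z0 by simp
qed

lemma G4_self:
  assumes "cmod z0 < 1" "r > 1"
  shows "G4 z0 r z0 \<noteq> 0"
proof -
  define m where "m = (Re z0)\<^sup>2 + (Im z0)\<^sup>2"
  have mc: "m = (cmod z0)\<^sup>2" unfolding m_def by (simp add: cmod_power2)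
  have m1: "m < 1" using mc assms by (simp add: power_less_one_iff abs_less_iff)
  have "G4 z0 r z0 = - ((r-1)\<^sup>2 * (1-m)\<^sup>2)" unfolding G4_def m_def by (simp add: power2_eq_square algebra_simps)
  moreover have "(r-1)\<^sup>2 * (1-m)\<^sup>2 > 0" using assms m1 by simp
  ultimately show ?thesis by linarith
qed

lemma key:
  assumes z0: "cmod z0 < 1" and z: "cmod z < 1" and ne: "z \<noteq> z0" and r: "r = exp t" "r > 1"
  shows "hilbert_disk z0 z = t \<longleftrightarrow> G4 z0 r z = 0"
proof -
  obtain su sv where su: "su < 0" and sv: "sv > 1"
    and e1: "(cmod (z - z0))\<^sup>2 * su\<^sup>2 + 2 * Re (cnj z0 * (z - z0)) * su + ((cmod z0)\<^sup>2 - 1) = 0"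
    and e2: "(cmod (z - z0))\<^sup>2 * sv\<^sup>2 + 2 * Re (cnj z0 * (z - z0)) * sv + ((cmod z0)\<^sup>2 - 1) = 0"
    and h: "hilbert_disk z0 z = ln ((1 - su) * sv / ((- su) * (sv - 1)))"
    using hd_formula[OF z0 z ne[symmetric]] by blast
  define R where "R = (1 - su) * sv / ((- su) * (sv - 1))"
  have R0: "R > 0" unfolding R_def using su sv by (intro divide_pos_pos mult_pos_pos) auto
  have a0: "(cmod (z - z0))\<^sup>2 > 0" using ne by simp
  have "hilbert_disk z0 z = t \<longleftrightarrow> R = r" unfolding h R_def[symmetric] r(1)
    using R0 by (metis exp_ln ln_exp)
  also have "\<dots> \<longleftrightarrow> (1 + r)\<^sup>2 * ((Re (cnj z0 * (z - z0)))\<^sup>2 - (cmod (z - z0))\<^sup>2 * ((cmod z0)\<^sup>2 - 1))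
       = (r - 1)\<^sup>2 * (Re (cnj z0 * (z - z0)) + ((cmod z0)\<^sup>2 - 1))\<^sup>2"
    unfolding R_def by (rule alg[OF a0 e1 e2 su sv r(2)])
  also have "\<dots> \<longleftrightarrow> G4 z0 r z = 0" using G_eq[of r z0 z] by linarith
  finally show ?thesis .
qed

theorem mainTheorem7:
  fixes z0 :: complex and t r :: real
  assumes "z0 \<in> ball 0 1" and "t > 0" and "r = exp t"
  shows "{z \<in> ball 0 1. hilbert_disk z0 z = t} =
           {z. (cnj z0)\<^sup>2 * of_real r * z\<^sup>2
               - of_real ((r\<^sup>2 + 1) * (cmod z0)\<^sup>2 - (r + 1)\<^sup>2) * z * cnj z
               + z0\<^sup>2 * of_real r * (cnj z)\<^sup>2
               - 4 * cnj z0 * of_real r * z - 4 * z0 * of_real r * cnj z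
               + of_real ((r + 1)\<^sup>2 * (cmod z0)\<^sup>2 - (r - 1)\<^sup>2) = 0}
      \<and> is_ellipse {z \<in> ball 0 1. hilbert_disk z0 z = t}
      \<and> {z. (cnj z0)\<^sup>2 * of_real r * z\<^sup>2
               - of_real ((r\<^sup>2 + 1) * (cmod z0)\<^sup>2 - (r + 1)\<^sup>2) * z * cnj z
               + z0\<^sup>2 * of_real r * (cnj z)\<^sup>2
               - 4 * cnj z0 * of_real r * z - 4 * z0 * of_real r * cnj z
               + of_real ((r + 1)\<^sup>2 * (cmod z0)\<^sup>2 - (r - 1)\<^sup>2) = 0} \<subseteq> ball 0 1"
  
proof -
  have z0: "cmod z0 < 1" using assms(1) by simp
  have r1: "r > 1" using assms(2,3) by simp
  have FG: "\<And>z. ((cnj z0)\<^sup>2 * of_real r * z\<^sup>2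
               - of_real ((r\<^sup>2 + 1) * (cmod z0)\<^sup>2 - (r + 1)\<^sup>2) * z * cnj z
               + z0\<^sup>2 * of_real r * (cnj z)\<^sup>2
               - 4 * cnj z0 * of_real r * z - 4 * z0 * of_real r * cnj z
               + of_real ((r + 1)\<^sup>2 * (cmod z0)\<^sup>2 - (r - 1)\<^sup>2) = 0) \<longleftrightarrow> G4 z0 r z = 0"
    unfolding F_eq by simp
  have S: "{z \<in> ball 0 1. hilbert_disk z0 z = t} = {z. G4 z0 r z = 0}"
  proof (intro set_eqI iffI)
    fix z assume "z \<in> {z \<in> ball 0 1. hilbert_disk z0 z = t}"
    hence z: "cmod z < 1" and h: "hilbert_disk z0 z = t" by auto
    have "z \<noteq> z0" using h assms(2) unfolding hilbert_disk_def by auto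
    thus "z \<in> {z. G4 z0 r z = 0}" using key[OF z0 z _ assms(3) r1] h by simp
  next
    fix z assume "z \<in> {z. G4 z0 r z = 0}"
    hence G: "G4 z0 r z = 0" by simp
    have z: "cmod z < 1" using ball_incl[OF z0 _ G] r1 by simp
    have "z \<noteq> z0" using G G4_self[OF z0 r1] by auto
    thus "z \<in> {z \<in> ball 0 1. hilbert_disk z0 z = t}" using key[OF z0 z _ assms(3) r1] G z by simp
  qed
  have S2: "{z. (cnj z0)\<^sup>2 * of_real r * z\<^sup>2
               - of_real ((r\<^sup>2 + 1) * (cmod z0)\<^sup>2 - (r + 1)\<^sup>2) * z * cnj z
               + z0\<^sup>2 * of_real r * (cnj z)\<^sup>2
               - 4 * cnj z0 * of_real r * z - 4 * z0 * of_real r * cnj z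
               + of_real ((r + 1)\<^sup>2 * (cmod z0)\<^sup>2 - (r - 1)\<^sup>2) = 0} = {z. G4 z0 r z = 0}"
    using FG by blast
  have E: "is_ellipse {z. G4 z0 r z = 0}"
  proof -
    obtain f1 f2 al where "dist f1 f2 < 2 * al" and "\<forall>z. dist z f1 + dist z f2 = 2 * al \<longleftrightarrow> G4 z0 r z = 0"
      using ellipse_part[OF z0 r1] by blast
    thus ?thesis unfolding is_ellipse_def by blast
  qed
  have B: "{z. G4 z0 r z = 0} \<subseteq> ball 0 1" using ball_incl[OF z0, of r] r1 by auto
  show ?thesis unfolding S2 S using E B by simp
qed

end
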